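(* Let $\mathbb{K}\in\{\mathbb{R},\mathbb{C}\}$. Let $S_1,\dots,S_M$ be non-trivial, independent linear subspaces of $\mathbb{K}^m$ with dimensions $d_1,\dots,d_M$, $d_{\max}=\max_i d_i$, and $\mathcal{U}=\bigcup_{i=1}^M S_i$. Let $\mathbf{W}=[w_1\cdots w_n]\in\mathbb{K}^{m\times n}$ be a rank $r$ matrix whose columns are drawn from $\mathcal{U}$, such that the columns drawn from each $S_i$ form a generic set for $S_i$. Factor $\mathbf{W}=\mathbf{W}\mathbf{W}^\dagger\mathbf{W}$ and let $Q$ be either $\mathrm{bin}(\mathbf{W}^\dagger\mathbf{W})$ or $\mathrm{abs}(\mathbf{W}^\dagger\mathbf{W})$. Then $\Xi_{\mathbf{W}}=Q^{d_{\max}}$ is a similarity matrix for $\mathbf{W}$. Moreover, if $\mathbf{W}=U_r\Sigma_rV_r^*$ is the skinny singular value decomposition of $\mathbf{W}$, then $\mathbf{W}^\dagger\mathbf{W}=V_rV_r^*$.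
   Context: Subspaces are independent if $\dim(S_1+\dots+S_M)=\sum_i\dim S_i\le m$. Data drawn from a $d$-dimensional subspace $S$ is generic if it has more than $d$ elements and any $d$ of them form a basis of $S$. $\mathrm{abs}(A)(i,j)=|A(i,j)|$; $\mathrm{bin}(A)(i,j)=1$ if $A(i,j)\ne0$, else $0$. A similarity matrix for $\mathbf{W}$ is a symmetric matrix $\Xi$ with $\Xi(i,j)\neq0$ iff $w_i,w_j$ come from the same subspace $S_l$. The skinny SVD of a rank $r$ matrix is $U_r\Sigma_rV_r^*$ with $U_r$, $V_r$ the first $r$ left/right singular vectors and $\Sigma_r=\mathrm{diag}(\sigma_1,\dots,\sigma_r)$. $\dagger$ denotes the Moore--Penrose pseudoinverse. *)

theory Defs
  imports "HOL-Analysis.Analysis"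
begin

text \<open>Matrices are 'a^'n^'m (m rows, n columns), K = real or complex.
  The conjugation of the scalar field is passed explicitly as cj
  (identity for real, cnj for complex).\<close>

definition adj :: "('a \<Rightarrow> 'a) \<Rightarrow> 'a::field^'n^'m \<Rightarrow> 'a^'m^'n" where
  "adj cj A = (\<chi> i j. cj (A $ j $ i))"

definition is_pinv :: "('a \<Rightarrow> 'a) \<Rightarrow> 'a::field^'n^'m \<Rightarrow> 'a^'m^'n \<Rightarrow> bool" where
  "is_pinv cj A X \<longleftrightarrow> A ** X ** A = A \<and> X ** A ** X = X \<and>
     adj cj (A ** X) = A ** X \<and> adj cj (X ** A) = X ** A"

definition pinv :: "('a \<Rightarrow> 'a) \<Rightarrow> 'a::field^'n^'m \<Rightarrow> 'a^'m^'n" where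
  "pinv cj A = (THE X. is_pinv cj A X)"

definition mabs :: "'a::real_normed_field^'n^'m \<Rightarrow> 'a^'n^'m" where
  "mabs A = (\<chi> i j. of_real (norm (A $ i $ j)))"

definition mbin :: "'a::field^'n^'m \<Rightarrow> 'a^'n^'m" where
  "mbin A = (\<chi> i j. if A $ i $ j \<noteq> 0 then 1 else 0)"

fun mpow :: "'a::comm_ring_1^'n^'n \<Rightarrow> nat \<Rightarrow> 'a^'n^'n" where
  "mpow A 0 = mat 1"
| "mpow A (Suc k) = A ** mpow A k"

text \<open>Subspaces S 0, ..., S (M-1) are independent:
  dim (S_1 + ... + S_M) = sum of dims (the sum of subspaces is the span of their union).\<close>
definition independent_subspaces :: "nat \<Rightarrow> (nat \<Rightarrow> ('a::field^'m) set) \<Rightarrow> bool" where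
  "independent_subspaces M S \<longleftrightarrow>
     vec.dim (vec.span (\<Union>i<M. S i)) = (\<Sum>i<M. vec.dim (S i))"

definition generic_data :: "('a::field^'m) set \<Rightarrow> ('j \<Rightarrow> 'a^'m) \<Rightarrow> 'j set \<Rightarrow> bool" where
  "generic_data T x J \<longleftrightarrow> card J > vec.dim T \<and>
     (\<forall>J'. J' \<subseteq> J \<and> card J' = vec.dim T \<longrightarrow>
        inj_on x J' \<and> vec.independent (x ` J') \<and> vec.span (x ` J') = T)"

definition similarity_matrix ::
  "'a::field^'n^'n \<Rightarrow> 'a^'n^'m \<Rightarrow> nat \<Rightarrow> (nat \<Rightarrow> ('a^'m) set) \<Rightarrow> bool" where
  "similarity_matrix Xi W M S \<longleftrightarrow> transpose Xi = Xi \<and>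
     (\<forall>i j. Xi $ i $ j \<noteq> 0 \<longleftrightarrow>
        (\<exists>l<M. column i W \<in> S l \<and> column j W \<in> S l))"

definition skinny_svd :: "('a \<Rightarrow> 'a) \<Rightarrow> 'a::real_normed_field^'n^'m \<Rightarrow>
    'a^'r::{finite,linorder}^'m \<Rightarrow> ('r \<Rightarrow> real) \<Rightarrow> 'a^'r::{finite,linorder}^'n \<Rightarrow> bool" where
  "skinny_svd cj W U \<sigma> V \<longleftrightarrow> CARD('r) = rank W \<and>
     adj cj U ** U = mat 1 \<and> adj cj V ** V = mat 1 \<and>
     (\<forall>i. \<sigma> i > 0) \<and> (\<forall>i j. i \<le> j \<longrightarrow> \<sigma> j \<le> \<sigma> i) \<and>
     W = U ** (\<chi> i j. if i = j then of_real (\<sigma> i) else 0) ** adj cj V"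

end

theory Submission imports Defs begin

locale cjf =
  fixes cj :: "'a::real_normed_field \<Rightarrow> 'a"
  assumes cj_add: "cj (x + y) = cj x + cj y"
  and cj_mult: "cj (x * y) = cj x * cj y"
  and cj_cj: "cj (cj x) = x"
  and cj_of_real: "cj (of_real r) = of_real r"
  and mult_cj: "x * cj x = of_real ((norm x)^2)"
  and norm_cj: "norm (cj x) = norm x"
begin

lemma cj_0[simp]: "cj 0 = 0" using cj_of_real[of 0] by simp
lemma cj_1[simp]: "cj 1 = 1" using cj_of_real[of 1] by simp
lemma cj_sum: "cj (sum f S) = sum (\<lambda>x. cj (f x)) S"
  by (induction S rule: infinite_finite_induct) (auto simp: cj_add)
lemma cj_minus: "cj (- x) = - cj x"
proof -
  have "cj x + cj (-x) = 0" using cj_add[of x "-x"] by simp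
  then show ?thesis by (simp add: eq_neg_iff_add_eq_0 add.commute)
qed
lemma cj_diff: "cj (x - y) = cj x - cj y"
  using cj_add[of x "-y"] cj_minus[of y] by simp
lemma cj_eq0[simp]: "cj x = 0 \<longleftrightarrow> x = 0"
proof
  assume "cj x = 0" then have "cj (cj x) = 0" by simp
  then show "x = 0" by (simp only: cj_cj)
qed simp
lemmas cj_simps[simp] = cj_add cj_mult cj_cj cj_sum cj_minus cj_diff cj_of_real

definition ip :: "'a^'n \<Rightarrow> 'a^'n \<Rightarrow> 'a" where
  "ip x y = (\<Sum>k\<in>UNIV. x$k * cj (y$k))"

lemma ip_add1: "ip (x + y) z = ip x z + ip y z"
  by (simp add: ip_def distrib_right sum.distrib)
lemma ip_add2: "ip z (x + y) = ip z x + ip z y"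
  by (simp add: ip_def distrib_left sum.distrib)
lemma ip_diff1: "ip (x - y) z = ip x z - ip y z"
  by (simp add: ip_def left_diff_distrib sum_subtractf)
lemma ip_diff2: "ip z (x - y) = ip z x - ip z y"
  by (simp add: ip_def right_diff_distrib sum_subtractf)
lemma ip_scale1: "ip (c *s x) z = c * ip x z"
  by (simp add: ip_def sum_distrib_left mult.assoc)
lemma ip_scale2: "ip z (c *s x) = cj c * ip z x"
  by (simp add: ip_def sum_distrib_left mult_ac)
lemma ip_sum1: "ip (sum f S) z = (\<Sum>x\<in>S. ip (f x) z)"
  by (induction S rule: infinite_finite_induct) (auto simp: ip_def distrib_right sum.distrib)
lemma ip_sum2: "ip z (sum f S) = (\<Sum>x\<in>S. cj (ip (f x) z))"
  by (induction S rule: infinite_finite_induct) (auto simp: ip_def distrib_left sum.distrib mult.commute)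
lemma ip_0_1[simp]: "ip 0 z = 0" by (simp add: ip_def)
lemma ip_0_2[simp]: "ip z 0 = 0" by (simp add: ip_def)
lemma ip_sym: "ip y x = cj (ip x y)"
  by (simp add: ip_def mult.commute)

lemma ip_self: "ip x x = of_real (\<Sum>k\<in>UNIV. (norm (x$k))^2)"
  by (simp add: ip_def mult_cj)

lemma ip_self_0: "ip x x = 0 \<Longrightarrow> x = 0"
proof -
  assume "ip x x = 0"
  then have "(of_real (\<Sum>k\<in>UNIV. (norm (x$k))^2) :: 'a) = 0" by (simp only: ip_self)
  then have "(\<Sum>k\<in>UNIV. (norm (x$k))^2) = 0" by (simp only: of_real_eq_0_iff)
  then have "\<forall>k. (norm (x$k))^2 = 0"
    by (subst (asm) sum_nonneg_eq_0_iff) auto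
  then show "x = 0" by (simp add: vec_eq_iff)
qed

lemma ip_self_0_iff[simp]: "ip x x = 0 \<longleftrightarrow> x = 0"
  using ip_self_0 by auto

lemma adj_adj[simp]: "adj cj (adj cj A) = A"
  by (simp add: adj_def vec_eq_iff)

lemma adj_mult: "adj cj (A ** B) = adj cj B ** adj cj A"
  by (simp add: adj_def matrix_matrix_mult_def vec_eq_iff mult.commute)

lemma ip_adj: "ip (A *v x) y = ip x (adj cj A *v y)"
proof -
  have "ip (A *v x) y = (\<Sum>k\<in>UNIV. \<Sum>j\<in>UNIV. A$k$j * x$j * cj (y$k))"
    by (simp add: ip_def matrix_vector_mult_def sum_distrib_right)
  also have "\<dots> = (\<Sum>j\<in>UNIV. \<Sum>k\<in>UNIV. A$k$j * x$j * cj (y$k))"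
    by (rule sum.swap)
  also have "\<dots> = ip x (adj cj A *v y)"
    by (simp add: ip_def matrix_vector_mult_def adj_def sum_distrib_left mult_ac)
  finally show ?thesis .
qed

lemma ip_adj2: "ip x (A *v y) = ip (adj cj A *v x) y"
  by (metis adj_adj ip_adj)

lemma adj_eqI:
  assumes "\<And>x y. ip (A *v x) y = ip x (B *v y)"
  shows "adj cj A = B"
proof -
  have "adj cj A *v y = B *v y" for y
  proof -
    have "ip x (adj cj A *v y - B *v y) = 0" for x
      by (simp add: ip_diff2 assms ip_adj[symmetric])
    from this[of "adj cj A *v y - B *v y"] show ?thesis by simp
  qed
  then show ?thesis by (simp add: matrix_eq)
qed

lemma ker_AA:
  fixes A :: "'a^'n^'m"
  assumes "(adj cj A ** A) *v x = 0" shows "A *v x = 0"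
proof -
  have "ip (A *v x) (A *v x) = ip (adj cj A *v (A *v x)) x"
    by (simp add: ip_adj2)
  also have "\<dots> = 0" using assms by (simp add: matrix_vector_mul_assoc)
  finally show ?thesis by simp
qed

lemma normal_eq_sol:
  fixes A :: "'a^'n^'m"
  defines "R \<equiv> range ((*v) (adj cj A))"
  shows "\<exists>!x. x \<in> R \<and> (adj cj A ** A) *v x = adj cj A *v y"
proof -
  let ?f = "(*v) (adj cj A ** A)"
  have subR: "vec.subspace R" unfolding R_def
    using vec.subspace_image[OF vec.subspace_UNIV] by simp
  have injR: "inj_on ?f R"
  proof (rule inj_onI)
    fix u v assume u: "u \<in> R" and v: "v \<in> R" and e: "?f u = ?f v"
    then have "?f (u - v) = 0" by (simp add: matrix_vector_mult_diff_distrib)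
    then have k: "A *v (u - v) = 0" by (rule ker_AA)
    from u v obtain a b where "u = adj cj A *v a" "v = adj cj A *v b" unfolding R_def by auto
    then have "u - v = adj cj A *v (a - b)" by (simp add: matrix_vector_mult_diff_distrib)
    then have "ip (u - v) (u - v) = ip (a - b) (A *v (u - v))"
      by (simp add: ip_adj)
    with k show "u = v" by simp
  qed
  have fR: "?f ` R \<subseteq> R" unfolding R_def
    by (auto simp: matrix_vector_mul_assoc[symmetric])
  have spR: "vec.span R = R" using subR vec.span_eq_iff by blast
  have "vec.dim (?f ` R) = vec.dim R"
    apply (rule vec.dim_image_eq)
     apply simp
    apply (subst spR)
    by (rule injR)
  then have "?f ` R = R"
    using vec.subspace_dim_equal[OF vec.subspace_image[OF subR] subR fR] by simp
  moreover have "adj cj A *v y \<in> R" unfolding R_def by simp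
  ultimately obtain x where "x \<in> R" "?f x = adj cj A *v y" by (metis imageE)
  then show ?thesis using injR by (metis inj_onD)
qed


lemma mv_sum: "(A::'a^'n^'m) *v sum f S = (\<Sum>x\<in>S. A *v f x)"
  by (induction S rule: infinite_finite_induct) (auto simp: matrix_vector_right_distrib)

lemma mv_scale: "(A::'a^'n^'m) *v (c *s x) = c *s (A *v x)"
  by (simp add: vec_eq_iff matrix_vector_mult_def sum_distrib_left mult_ac)

lemma pinv_exists:
  fixes A :: "'a^'n^'m"
  shows "\<exists>X. is_pinv cj A X"
proof -
  define N where "N = adj cj A"
  define R where "R = range ((*v) N)"
  define sol where "sol y = (THE x. x \<in> R \<and> (N ** A) *v x = N *v y)" for y
  have solp: "sol y \<in> R \<and> (N ** A) *v sol y = N *v y" for y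
    unfolding sol_def R_def N_def by (rule theI'[OF normal_eq_sol])
  have uniq: "x1 = x2" if "x1 \<in> R" "x2 \<in> R" "(N ** A) *v x1 = (N ** A) *v x2" for x1 x2
    using normal_eq_sol[of A "A *v x1"] that unfolding R_def N_def
    by (metis matrix_vector_mul_assoc)
  have subR: "vec.subspace R" unfolding R_def
    using vec.subspace_image[OF vec.subspace_UNIV] by simp
  define X where "X = (\<chi> i j. sol (axis j 1) $ i)"
  have colX: "column j X = sol (axis j 1)" for j
    by (simp add: X_def column_def vec_eq_iff)
  have Xy: "X *v y = (\<Sum>j\<in>UNIV. y$j *s sol (axis j 1))" for y
    by (simp add: matrix_mult_sum colX)
  have XR: "X *v y \<in> R" for y
    unfolding Xy using subR solp
    by (intro vec.subspace_sum) (auto intro: vec.subspace_scale)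
  have XN: "(N ** A) *v (X *v y) = N *v y" for y
  proof -
    have "(N ** A) *v (X *v y) = (\<Sum>j\<in>UNIV. y$j *s (N *v axis j 1))"
      unfolding Xy mv_sum mv_scale using solp by simp
    also have "\<dots> = N *v (\<Sum>j\<in>UNIV. y$j *s axis j 1)"
      unfolding mv_sum mv_scale ..
    finally show ?thesis by (simp add: basis_expansion)
  qed
  have kerA: "A *v x = 0" if "(N ** A) *v x = 0" for x
    using ker_AA[of A x] that N_def by simp
  have RA: "ip r z = 0" if "r \<in> R" "A *v z = 0" for r z
  proof -
    from that obtain w where "r = N *v w" unfolding R_def by auto
    then have "ip r z = ip w (adj cj N *v z)" by (simp add: ip_adj)
    then show ?thesis using that by (simp add: N_def)
  qed
  have c1: "A *v (X *v (A *v x)) = A *v x" for x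
  proof -
    have "(N ** A) *v (X *v (A *v x) - x) = 0"
      using XN[of "A *v x"] by (simp add: matrix_vector_mult_diff_distrib matrix_vector_mul_assoc)
    then have "A *v (X *v (A *v x) - x) = 0" by (rule kerA)
    then show ?thesis by (simp add: matrix_vector_mult_diff_distrib)
  qed
  have c2: "X *v (A *v (X *v y)) = X *v y" for y
    apply (rule uniq[OF XR XR])
    using XN by (simp add: matrix_vector_mul_assoc[symmetric])
  have c3: "ip (A *v (X *v x)) y = ip x (A *v (X *v y))" for x y
  proof -
    have "N *v (y - A *v (X *v y)) = 0" using XN[of y]
      by (simp add: matrix_vector_mult_diff_distrib matrix_vector_mul_assoc matrix_mul_assoc)
    then have e1: "ip (A *v (X *v x)) (y - A *v (X *v y)) = 0"
      using ip_adj[of A "X *v x" "y - A *v (X *v y)"] by (simp add: N_def)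
    have "N *v (x - A *v (X *v x)) = 0" using XN[of x]
      by (simp add: matrix_vector_mult_diff_distrib matrix_vector_mul_assoc matrix_mul_assoc)
    then have e2: "ip (x - A *v (X *v x)) (A *v (X *v y)) = 0"
      using ip_adj2[of "x - A *v (X *v x)" A "X *v y"] by (simp add: N_def)
    from e1 e2 show ?thesis by (simp add: ip_diff1 ip_diff2)
  qed
  have c4: "ip (X *v (A *v x)) y = ip x (X *v (A *v y))" for x y
  proof -
    have k: "A *v (z - X *v (A *v z)) = 0" for z
      using c1[of z] by (simp add: matrix_vector_mult_diff_distrib)
    have e1: "ip (X *v (A *v x)) (y - X *v (A *v y)) = 0"
      by (rule RA[OF XR k])
    have e2: "ip (x - X *v (A *v x)) (X *v (A *v y)) = 0"
      using RA[OF XR k, of "A *v y" x] by (metis ip_sym cj_0)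
    from e1 e2 show ?thesis by (simp add: ip_diff1 ip_diff2)
  qed
  have "is_pinv cj A X"
    unfolding is_pinv_def
  proof (intro conjI)
    show "A ** X ** A = A" using c1 by (simp add: matrix_eq matrix_vector_mul_assoc matrix_mul_assoc)
    show "X ** A ** X = X" using c2 by (simp add: matrix_eq matrix_vector_mul_assoc matrix_mul_assoc)
    show "adj cj (A ** X) = A ** X"
      by (rule adj_eqI) (use c3 in \<open>simp add: matrix_vector_mul_assoc\<close>)
    show "adj cj (X ** A) = X ** A"
      by (rule adj_eqI) (use c4 in \<open>simp add: matrix_vector_mul_assoc\<close>)
  qed
  then show ?thesis ..
qed

lemma pinv_unique:
  fixes A :: "'a^'n^'m"
  assumes "is_pinv cj A X" "is_pinv cj A Y"
  shows "X = Y"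
proof -
  from assms have a: "A ** X ** A = A" "X ** A ** X = X" "adj cj (A ** X) = A ** X"
      "adj cj (X ** A) = X ** A" "A ** Y ** A = A" "Y ** A ** Y = Y"
      "adj cj (A ** Y) = A ** Y" "adj cj (Y ** A) = Y ** A"
    unfolding is_pinv_def by auto
  have h1: "adj cj A = adj cj A ** A ** Y"
  proof -
    have "adj cj A = adj cj (A ** Y ** A)" using a by simp
    also have "\<dots> = adj cj A ** adj cj (A ** Y)" by (simp add: adj_mult matrix_mul_assoc)
    finally show ?thesis using a by (simp add: matrix_mul_assoc)
  qed
  have h2: "adj cj A = X ** A ** adj cj A"
  proof -
    have "adj cj A = adj cj (A ** X ** A)" using a by simp
    also have "\<dots> = adj cj (X ** A) ** adj cj A" by (simp add: adj_mult matrix_mul_assoc)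
    finally show ?thesis using a by (simp add: matrix_mul_assoc)
  qed
  have "X = X ** (A ** X)" using a by (simp add: matrix_mul_assoc)
  also have "\<dots> = X ** adj cj X ** adj cj A" using a by (metis adj_mult matrix_mul_assoc)
  also have "\<dots> = X ** adj cj X ** adj cj A ** A ** Y" using h1 by (metis matrix_mul_assoc)
  also have "\<dots> = X ** adj cj (A ** X) ** A ** Y" by (simp add: adj_mult matrix_mul_assoc)
  also have "\<dots> = X ** A ** Y" using a by (simp add: matrix_mul_assoc)
  finally have x: "X = X ** A ** Y" .
  have "Y = (Y ** A) ** Y" using a by simp
  also have "\<dots> = adj cj A ** adj cj Y ** Y" using a by (metis adj_mult)
  also have "\<dots> = X ** A ** adj cj A ** adj cj Y ** Y" using h2 by (metis matrix_mul_assoc)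
  also have "\<dots> = X ** A ** adj cj (Y ** A) ** Y" by (simp add: adj_mult matrix_mul_assoc)
  also have "\<dots> = X ** A ** Y" using a by (metis a(6) matrix_mul_assoc)
  finally show ?thesis using x by simp
qed

lemma pinv_is: "is_pinv cj A (pinv cj A)"
  unfolding pinv_def using pinv_exists[of A] pinv_unique[of A]
  by (metis theI)

lemma pinv_eq: "is_pinv cj A X \<Longrightarrow> pinv cj A = X"
  using pinv_is pinv_unique by blast


lemma diag_mult:
  "((\<chi> i j. if i = j then a i else 0) :: 'b::comm_semiring_1^'r^'r) ** (\<chi> i j. if i = j then b i else 0)
   = (\<chi> i j. if i = j then a i * b i else 0)"
proof -
  have "(\<Sum>k\<in>UNIV. (if i = k then a i else 0) * (if k = j then b k else 0)) =
        (if i = j then a i * b i else 0)" for i j :: 'r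
  proof -
    have "(\<Sum>k\<in>UNIV. (if i = k then a i else 0) * (if k = j then b k else 0)) =
          (\<Sum>k\<in>UNIV. if k = i then a i * (if i = j then b i else 0) else 0)"
      by (rule sum.cong) auto
    also have "\<dots> = a i * (if i = j then b i else 0)" by (subst sum.delta) auto
    finally show ?thesis by simp
  qed
  then show ?thesis by (simp add: matrix_matrix_mult_def vec_eq_iff)
qed

lemma svd_pinv:
  fixes W :: "'a^'n^'m" and U :: "'a^'r^'m" and V :: "'a^'r^'n"
  assumes u: "adj cj U ** U = mat 1" and v: "adj cj V ** V = mat 1" and s: "\<forall>i. \<sigma> i > 0"
    and w: "W = U ** (\<chi> i j. if i = j then of_real (\<sigma> i) else 0) ** adj cj V"
  shows "pinv cj W ** W = V ** adj cj V"
proof -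
  define D :: "'a^'r^'r" where "D = (\<chi> i j. if i = j then of_real (\<sigma> i) else 0)"
  define D' :: "'a^'r^'r" where "D' = (\<chi> i j. if i = j then of_real (1 / \<sigma> i) else 0)"
  have dd: "D ** D' = mat 1" "D' ** D = mat 1"
    unfolding D_def D'_def diag_mult using s
    by (auto simp: mat_def vec_eq_iff of_real_mult[symmetric] simp del: of_real_mult)
       (metis less_irrefl)+
  have adjD: "adj cj D = D" "adj cj D' = D'"
    by (auto simp: D_def D'_def adj_def vec_eq_iff simp del: of_real_divide cj_simps
          intro: cj_of_real)
  have uu: "adj cj U ** (U ** Z) = Z" for Z :: "'a^'k^'r"
    by (simp add: matrix_mul_assoc u)
  have vv: "adj cj V ** (V ** Z) = Z" for Z :: "'a^'k^'r"
    by (simp add: matrix_mul_assoc v)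
  have d1: "D ** (D' ** Z) = Z" for Z :: "'a^'k^'r"
    by (simp add: matrix_mul_assoc dd)
  have d2: "D' ** (D ** Z) = Z" for Z :: "'a^'k^'r"
    by (simp add: matrix_mul_assoc dd)
  have wD: "W = U ** (D ** adj cj V)" using w by (simp add: D_def matrix_mul_assoc)
  define X where "X = V ** (D' ** adj cj U)"
  have WX: "W ** X = U ** adj cj U"
    by (simp add: wD X_def matrix_mul_assoc[symmetric] vv d1)
  have XW: "X ** W = V ** adj cj V"
    by (simp add: wD X_def matrix_mul_assoc[symmetric] uu d2)
  have "is_pinv cj W X"
    unfolding is_pinv_def
  proof (intro conjI)
    show "W ** X ** W = W" unfolding WX
      by (simp add: wD matrix_mul_assoc[symmetric] uu)
    show "X ** W ** X = X" unfolding XW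
      by (simp add: X_def matrix_mul_assoc[symmetric] vv)
    show "adj cj (W ** X) = W ** X" unfolding WX by (simp add: adj_mult)
    show "adj cj (X ** W) = X ** W" unfolding XW by (simp add: adj_mult)
  qed
  then have "pinv cj W = X" by (rule pinv_eq)
  then show ?thesis using XW by simp
qed

end

lemma dim_union_eq:
  "vec.dim (vec.span (A \<union> B)) + vec.dim (vec.span A \<inter> vec.span B) = vec.dim A + vec.dim (B::('a::field^'m) set)"
  using vec.dim_sums_Int[OF vec.subspace_span vec.subspace_span, of A B]
  by (simp add: vec.span_Un)

lemma dim_UN_le:
  fixes S :: "nat \<Rightarrow> ('a::field^'m) set"
  assumes "finite I"
  shows "vec.dim (vec.span (\<Union>i\<in>I. S i)) \<le> (\<Sum>i\<in>I. vec.dim (S i))"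
  using assms
proof (induction I rule: finite_induct)
  case empty then show ?case by simp
next
  case (insert a I)
  have "vec.dim (vec.span (\<Union>i\<in>insert a I. S i)) = vec.dim (vec.span (S a \<union> (\<Union>i\<in>I. S i)))"
    by simp
  also have "\<dots> \<le> vec.dim (S a) + vec.dim (\<Union>i\<in>I. S i)"
    using dim_union_eq[of "S a" "\<Union>i\<in>I. S i"] by linarith
  also have "\<dots> \<le> vec.dim (S a) + (\<Sum>i\<in>I. vec.dim (S i))"
    using insert.IH by (simp add: vec.dim_span[symmetric, of "\<Union>i\<in>I. S i"] del: vec.dim_span)
  finally show ?case using insert by simp
qed

lemma indep_sum:
  fixes S :: "nat \<Rightarrow> ('a::field^'m) set"
  assumes sub: "\<forall>i<M. vec.subspace (S i)" and ind: "independent_subspaces M S"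
    and s: "\<forall>b<M. s b \<in> S b" and z: "(\<Sum>b<M. s b) = 0" and a: "a < M"
  shows "s a = 0"
proof -
  define R where "R = {..<M} - {a}"
  define U where "U = (\<Union>i\<in>R. S i)"
  have fR: "finite R" by (simp add: R_def)
  have M: "{..<M} = insert a R" "a \<notin> R" using a by (auto simp: R_def)
  have UN: "(\<Union>i<M. S i) = S a \<union> U" by (simp add: M U_def)
  have spa: "vec.span (S a) = S a" using sub a vec.span_eq_iff by blast
  have e1: "vec.dim (vec.span (S a \<union> U)) = vec.dim (S a) + (\<Sum>i\<in>R. vec.dim (S i))"
    using ind unfolding independent_subspaces_def UN by (simp add: M fR)
  have e2: "vec.dim U \<le> (\<Sum>i\<in>R. vec.dim (S i))"
    using dim_UN_le[OF fR, of S] by (simp add: U_def)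
  have e3: "vec.dim (vec.span (S a \<union> U)) + vec.dim (S a \<inter> vec.span U) = vec.dim (S a) + vec.dim U"
    using dim_union_eq[of "S a" U] by (simp only: spa)
  have "vec.dim (S a \<inter> vec.span U) = 0"
    using e1 e2 e3 by linarith
  then have int0: "S a \<inter> vec.span U \<subseteq> {0}" by simp
  have "s a = - (\<Sum>b\<in>R. s b)" using z by (simp add: M fR eq_neg_iff_add_eq_0)
  also have "\<dots> \<in> vec.span U"
    by (intro vec.span_neg vec.span_sum vec.span_base) (use s in \<open>auto simp: U_def R_def\<close>)
  finally show ?thesis using s a int0 by auto
qed

context cjf begin

lemma col_mv: "(A::'a^'n^'m) *v axis k 1 = column k A"
  by (simp add: vec_eq_iff matrix_vector_mult_def column_def axis_def if_distrib if_distribR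
      cong: if_cong)

end

fun reach :: "('n \<Rightarrow> 'n \<Rightarrow> bool) \<Rightarrow> nat \<Rightarrow> 'n \<Rightarrow> 'n \<Rightarrow> bool" where
  "reach G 0 i j = (i = j)"
| "reach G (Suc k) i j = (\<exists>l. G i l \<and> reach G k l j)"

lemma reach_snoc: "reach G k i h \<Longrightarrow> G h g \<Longrightarrow> reach G (Suc k) i g"
  by (induction k arbitrary: i) auto

lemma reach_suc: "(\<forall>i. G i i) \<Longrightarrow> reach G k i j \<Longrightarrow> reach G (Suc k) i j"
  by auto

lemma reach_mono:
  assumes "\<forall>i. G i i" "k \<le> k'" "reach G k i j" shows "reach G k' i j"
  using assms(2)
proof (induction k' rule: dec_induct)
  case base show ?case by (rule assms(3))
next
  case (step n) then show ?case using reach_suc[of G, OF assms(1)] by blast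
qed

lemma reach_inv: "(\<forall>i j. G i j \<longrightarrow> f i = f j) \<Longrightarrow> reach G k i j \<Longrightarrow> f i = f j"
  by (induction k arbitrary: i) auto

lemma mpow_real:
  fixes q :: "'n::finite \<Rightarrow> 'n \<Rightarrow> real"
  assumes q: "\<forall>i j. q i j \<ge> 0"
  shows "\<exists>p. (\<forall>i j. p i j \<ge> 0) \<and>
     mpow ((\<chi> i j. of_real (q i j)) :: 'a::real_normed_field^'n^'n) k = (\<chi> i j. of_real (p i j)) \<and>
     (\<forall>i j. p i j \<noteq> 0 \<longleftrightarrow> reach (\<lambda>i j. q i j \<noteq> 0) k i j)"
proof (induction k)
  case 0
  show ?case
    by (rule exI[of _ "\<lambda>i j. if i = j then 1 else 0"]) (auto simp: mat_def vec_eq_iff)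
next
  case (Suc k)
  then obtain p where p: "\<forall>i j. p i j \<ge> 0"
    "mpow ((\<chi> i j. of_real (q i j)) :: 'a^'n^'n) k = (\<chi> i j. of_real (p i j))"
    "\<forall>i j. p i j \<noteq> 0 \<longleftrightarrow> reach (\<lambda>i j. q i j \<noteq> 0) k i j" by blast
  define p' where "p' i j = (\<Sum>l\<in>UNIV. q i l * p l j)" for i j
  have nn: "\<forall>i j. p' i j \<ge> 0" using p(1) q by (auto simp: p'_def intro!: sum_nonneg)
  have eq: "mpow ((\<chi> i j. of_real (q i j)) :: 'a^'n^'n) (Suc k) = (\<chi> i j. of_real (p' i j))"
    by (simp add: p(2) matrix_matrix_mult_def p'_def vec_eq_iff)
  have "p' i j \<noteq> 0 \<longleftrightarrow> (\<exists>l. q i l \<noteq> 0 \<and> p l j \<noteq> 0)" for i j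
  proof -
    have "p' i j = 0 \<longleftrightarrow> (\<forall>l\<in>UNIV. q i l * p l j = 0)"
      unfolding p'_def by (rule sum_nonneg_eq_0_iff) (use p(1) q in auto)
    then show ?thesis by auto
  qed
  then show ?case using nn eq p(3) by auto
qed

lemma mpow_comm: "mpow A k ** A = A ** mpow A k"
  by (induction k) (simp_all add: matrix_mul_assoc[symmetric])

lemma mpow_transpose: "transpose A = A \<Longrightarrow> transpose (mpow A k) = mpow A k"
  by (induction k) (simp_all add: matrix_transpose_mul mpow_comm)

locale clus = cjf cj for cj :: "'a::real_normed_field \<Rightarrow> 'a" +
  fixes M :: nat and S :: "nat \<Rightarrow> ('a^'m) set" and W :: "'a^'n^'m"
  assumes subS: "\<forall>i<M. vec.subspace (S i) \<and> S i \<noteq> {0}"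
  and indS: "independent_subspaces M S"
  and inU: "\<forall>j. column j W \<in> (\<Union>i<M. S i)"
  and gen: "\<forall>i<M. generic_data (S i) (\<lambda>j. column j W) {j. column j W \<in> S i}"
begin

abbreviation w where "w j \<equiv> column j W"

definition P where "P = pinv cj W ** W"

abbreviation u where "u j \<equiv> column j P"

lemma P_props: "W ** P = W" "adj cj P = P" "P ** P = P" "W *v z = 0 \<Longrightarrow> P *v z = 0"
proof -
  have a: "W ** pinv cj W ** W = W" "pinv cj W ** W ** pinv cj W = pinv cj W"
     "adj cj (pinv cj W ** W) = pinv cj W ** W"
    using pinv_is[of W] unfolding is_pinv_def by auto
  show "W ** P = W" using a by (simp add: P_def matrix_mul_assoc)
  show "adj cj P = P" using a by (simp add: P_def)
  show "P ** P = P" using a by (simp add: P_def matrix_mul_assoc)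
  show "W *v z = 0 \<Longrightarrow> P *v z = 0" by (simp add: P_def matrix_vector_mul_assoc[symmetric])
qed

lemma Wu: "W *v u j = w j"
proof -
  have "W *v u j = W *v (P *v axis j 1)" by (simp add: col_mv)
  also have "\<dots> = W *v axis j 1" by (simp add: matrix_vector_mul_assoc P_props)
  finally show ?thesis by (simp add: col_mv)
qed

lemma Pent: "P$i$j = ip (u j) (u i)"
proof -
  have "P$i$j = (adj cj P ** P)$i$j" using P_props by simp
  then show ?thesis
    by (simp add: matrix_matrix_mult_def adj_def ip_def column_def mult.commute)
qed

lemma Psym: "P$j$i = cj (P$i$j)"
proof -
  have "adj cj P $ j $ i = P $ j $ i" using P_props by simp
  then show ?thesis by (simp add: adj_def)
qed

lemma transfer:
  assumes "(\<Sum>k\<in>K. c k *s w k) = 0"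
  shows "(\<Sum>k\<in>K. c k *s u k) = 0"
proof -
  define z where "z = (\<Sum>k\<in>K. c k *s axis k 1)"
  have "W *v z = (\<Sum>k\<in>K. c k *s w k)" by (simp add: z_def mv_sum mv_scale col_mv)
  then have "P *v z = 0" using assms P_props by simp
  moreover have "P *v z = (\<Sum>k\<in>K. c k *s u k)" by (simp add: z_def mv_sum mv_scale col_mv)
  ultimately show ?thesis by simp
qed

lemma P_unique:
  assumes "\<And>z. W *v z = 0 \<Longrightarrow> ip p z = 0" "W *v p = W *v x"
  shows "p = P *v x"
proof -
  have perp: "ip (P *v x) z = 0" if "W *v z = 0" for z
    using ip_adj[of P x z] P_props that by simp
  have k: "W *v (p - P *v x) = 0"
    using assms(2) by (simp add: matrix_vector_mult_diff_distrib matrix_vector_mul_assoc P_props)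
  have "ip (p - P *v x) (p - P *v x) = 0"
    by (simp add: ip_diff1 assms(1)[OF k] perp[OF k])
  then show ?thesis by simp
qed

lemma d_pos: "l < M \<Longrightarrow> vec.dim (S l) > 0"
proof (rule ccontr)
  assume l: "l < M" and "\<not> vec.dim (S l) > 0"
  then have "S l \<subseteq> {0}" by simp
  moreover have "0 \<in> S l" using subS l vec.subspace_0 by blast
  ultimately show False using subS l by auto
qed

lemma J_props:
  assumes "l < M"
  defines "J \<equiv> {j. w j \<in> S l}"
  shows "card J > vec.dim (S l)"
    and "\<And>J'. J' \<subseteq> J \<Longrightarrow> card J' = vec.dim (S l) \<Longrightarrow>
           inj_on w J' \<and> vec.independent (w ` J') \<and> vec.span (w ` J') = S l"
  using gen assms unfolding generic_data_def by auto

lemma w_nz: "w j \<noteq> 0"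
proof -
  obtain l where l: "l < M" "w j \<in> S l" using inU by auto
  define J where "J = {j. w j \<in> S l}"
  have j: "j \<in> J" using l by (simp add: J_def)
  have c: "card J > vec.dim (S l)" using J_props(1)[OF l(1)] by (simp add: J_def)
  have "vec.dim (S l) - 1 \<le> card (J - {j})" using c j by (simp add: card_Diff_singleton)
  then obtain T where T: "T \<subseteq> J - {j}" "card T = vec.dim (S l) - 1" "finite T"
    by (rule obtain_subset_with_card_n)
  have jT: "j \<notin> T" using T(1) by blast
  have "card (insert j T) = vec.dim (S l)"
    using card_insert_disjoint[OF T(3) jT] T(2) d_pos[OF l(1)] by linarith
  moreover have "insert j T \<subseteq> {j. w j \<in> S l}" using T j by (auto simp: J_def)
  ultimately have "inj_on w (insert j T) \<and> vec.independent (w ` insert j T) \<and> vec.span (w ` insert j T) = S l"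
    by (intro J_props(2)[OF l(1)])
  then have "vec.independent (w ` insert j T)" by (rule conjunct1[OF conjunct2])
  then show ?thesis by (metis image_insert insertI1 vec.dependent_zero)
qed

lemma cl_unique: "a < M \<Longrightarrow> b < M \<Longrightarrow> w j \<in> S a \<Longrightarrow> w j \<in> S b \<Longrightarrow> a = b"
proof (rule ccontr)
  assume ab: "a < M" "b < M" "w j \<in> S a" "w j \<in> S b" "a \<noteq> b"
  define s where "s c = (if c = a then w j else if c = b then - w j else 0)" for c
  have "\<forall>c<M. s c \<in> S c" using ab subS
    by (auto simp: s_def intro: vec.subspace_neg vec.subspace_0)
  moreover have "(\<Sum>c<M. s c) = 0"
  proof -
    have "(\<Sum>c<M. s c) = (\<Sum>c\<in>{a,b}. s c)"
      by (rule sum.mono_neutral_right) (use ab in \<open>auto simp: s_def\<close>)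
    then show ?thesis using ab by (simp add: s_def)
  qed
  ultimately have "s a = 0" using indep_sum[of M S s a] subS indS ab by auto
  then show False using w_nz by (simp add: s_def)
qed

definition cl where "cl j = (THE l. l < M \<and> w j \<in> S l)"

lemma cl_props: "cl j < M" "w j \<in> S (cl j)"
proof -
  obtain l where l: "l < M" "w j \<in> S l" using inU by auto
  have "cl j = l" unfolding cl_def using l cl_unique by blast
  then show "cl j < M" "w j \<in> S (cl j)" using l by auto
qed

lemma cl_eq: "l < M \<Longrightarrow> w j \<in> S l \<Longrightarrow> cl j = l"
  using cl_props cl_unique by blast

lemma J_eq: "l < M \<Longrightarrow> {j. w j \<in> S l} = {j. cl j = l}"
  using cl_props cl_eq by blast

definition E where "E c x = (\<chi> k. if cl k = c then x$k else 0)"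

lemma WE_in: "c < M \<Longrightarrow> W *v E c x \<in> S c"
  unfolding matrix_mult_sum
  apply (rule vec.subspace_sum)
  using subS apply blast
  using subS cl_props by (auto simp: E_def intro: vec.subspace_scale vec.subspace_0)

lemma sumE: "(\<Sum>c<M. E c x) = x"
proof -
  have "(\<Sum>c<M. (if cl k = c then x$k else 0)) = x$k" for k
    using cl_props(1)[of k] by (simp add: sum.delta)
  then show ?thesis by (simp add: vec_eq_iff E_def sum_component)
qed

lemma WE_sum: "W *v x = (\<Sum>c<M. W *v E c x)"
  by (metis sumE mv_sum)

lemma kerE: "W *v z = 0 \<Longrightarrow> c < M \<Longrightarrow> W *v E c z = 0"
  using indep_sum[of M S "\<lambda>c. W *v E c z" c] subS indS WE_in WE_sum[of z] by auto

lemma ipE: "ip (E c x) z = ip x (E c z)"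
  unfolding ip_def E_def by (rule sum.cong) auto

lemma block: "cl i \<noteq> cl j \<Longrightarrow> P$i$j = 0"
proof -
  assume ne: "cl i \<noteq> cl j"
  define b where "b = cl j"
  have b: "b < M" using cl_props by (simp add: b_def)
  define y where "y = P *v axis j 1"
  have Wy: "W *v y = w j" by (simp add: y_def col_mv Wu)
  have "W *v E b y = w j"
  proof -
    define s where "s c = W *v E c y - (if c = b then w j else 0)" for c
    have "\<forall>c<M. s c \<in> S c"
      using WE_in subS cl_props(2)[of j] by (auto simp: s_def b_def intro: vec.subspace_diff vec.subspace_0)
    moreover have "(\<Sum>c<M. s c) = 0"
      using Wy WE_sum[of y] b by (simp add: s_def sum_subtractf)
    ultimately have "s b = 0" using indep_sum[of M S s b] subS indS b by auto
    then show ?thesis by (simp add: s_def)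
  qed
  moreover have "ip (E b y) z = 0" if "W *v z = 0" for z
  proof -
    have "ip (E b y) z = ip y (E b z)" by (rule ipE)
    also have "\<dots> = ip (axis j 1) (P *v E b z)"
      unfolding y_def ip_adj P_props ..
    also have "\<dots> = 0" using kerE[OF that b] P_props by simp
    finally show ?thesis .
  qed
  ultimately have "E b y = P *v axis j 1"
    using P_unique[of "E b y" "axis j 1"] by (simp add: col_mv)
  then have "(E b y)$i = P$i$j" by (simp add: col_mv column_def)
  then show ?thesis using ne by (simp add: E_def b_def)
qed


lemma finJ: "finite (J::'n set)" by simp

lemma Pdiag: "P$i$i \<noteq> 0"
proof
  assume "P$i$i = 0"
  then have "u i = 0" by (simp add: Pent)
  then have "w i = 0" using Wu[of i] by simp
  then show False using w_nz by simp
qed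

lemma extend_J:
  assumes l: "l < M" and F: "F \<subseteq> {j. cl j = l}" "card F \<le> vec.dim (S l)"
  obtains F' where "F \<subseteq> F'" "F' \<subseteq> {j. cl j = l}" "card F' = vec.dim (S l)"
proof -
  have c: "card {j. cl j = l} > vec.dim (S l)" using J_props(1)[OF l] J_eq[OF l] by simp
  have "card F \<le> card {j. cl j = l}" using F by (simp add: card_mono)
  then have "vec.dim (S l) - card F \<le> card ({j. cl j = l} - F)"
    using c F by (simp add: card_Diff_subset)
  then obtain T where T: "T \<subseteq> {j. cl j = l} - F" "card T = vec.dim (S l) - card F" "finite T"
    by (rule obtain_subset_with_card_n)
  have "card (F \<union> T) = card F + card T"
    by (rule card_Un_disjoint) (use T in auto)
  then have "card (F \<union> T) = vec.dim (S l)" using T F by simp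
  then show ?thesis using that[of "F \<union> T"] T F by auto
qed

lemma indep_J:
  assumes l: "l < M" and F: "F \<subseteq> {j. cl j = l}" "card F \<le> vec.dim (S l)"
    and z: "(\<Sum>f\<in>F. c f *s w f) = 0" and f: "f \<in> F"
  shows "c f = 0"
proof -
  obtain F' where F': "F \<subseteq> F'" "F' \<subseteq> {j. cl j = l}" "card F' = vec.dim (S l)"
    using extend_J[OF l F] .
  have "inj_on w F' \<and> vec.independent (w ` F') \<and> vec.span (w ` F') = S l"
    using J_props(2)[OF l] F' J_eq[OF l] by simp
  then have inj: "inj_on w F'" and ind: "vec.independent (w ` F')" by auto
  define c' where "c' v = (if inv_into F' w v \<in> F then c (inv_into F' w v) else 0)" for v
  have "(\<Sum>v\<in>w ` F'. c' v *s v) = (\<Sum>k\<in>F'. c' (w k) *s w k)"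
    by (rule sum.reindex[OF inj, unfolded o_def])
  also have "\<dots> = (\<Sum>k\<in>F'. (if k \<in> F then c k else 0) *s w k)"
  proof (rule sum.cong)
    fix k assume "k \<in> F'"
    then have "c' (w k) = (if k \<in> F then c k else 0)" by (simp add: c'_def inv_into_f_f[OF inj])
    then show "c' (w k) *s w k = (if k \<in> F then c k else 0) *s w k" by simp
  qed simp
  also have "\<dots> = (\<Sum>k\<in>F. c k *s w k)"
    using F'(1) by (simp add: if_distrib[of "\<lambda>a. a *s _"] sum.If_cases Int_absorb1 del: vector_smult_lzero)
  finally have "(\<Sum>v\<in>w ` F'. c' v *s v) = 0" using z by simp
  then have "c' (w f) = 0" using ind f F'(1) unfolding vec.independent_explicit by blast
  moreover have "inv_into F' w (w f) = f" by (rule inv_into_f_f[OF inj]) (use f F'(1) in blast)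
  ultimately show ?thesis using f by (simp add: c'_def)
qed

lemma span_J:
  assumes l: "l < M" and F: "F \<subseteq> {j. cl j = l}" "card F = vec.dim (S l)" and g: "cl g = l"
  obtains c where "w g = (\<Sum>f\<in>F. c f *s w f)"
proof -
  have "inj_on w F \<and> vec.independent (w ` F) \<and> vec.span (w ` F) = S l"
    using J_props(2)[OF l] F J_eq[OF l] by simp
  then have inj: "inj_on w F" and sp: "vec.span (w ` F) = S l" by auto
  have fin: "finite (w ` F)" by simp
  have "w g \<in> S l" using cl_props g by metis
  then obtain c where "w g = (\<Sum>v\<in>w ` F. c v *s v)"
    using sp vec.span_finite[OF fin] by auto
  also have "\<dots> = (\<Sum>k\<in>F. c (w k) *s w k)"
    by (rule sum.reindex[OF inj, unfolded o_def])
  finally show ?thesis by (rule that)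
qed

lemma rel_u:
  assumes "g \<notin> F" "finite F" "w g = (\<Sum>f\<in>F. c f *s w f)"
  shows "u g = (\<Sum>f\<in>F. c f *s u f)"
proof -
  define c' where "c' k = (if k = g then -1 else c k)" for k
  have e: "(\<Sum>k\<in>F. c' k *s v k) = (\<Sum>k\<in>F. c k *s v k)" for v :: "'n \<Rightarrow> 'a^'x"
    by (rule sum.cong) (use assms in \<open>auto simp: c'_def\<close>)
  have "(\<Sum>k\<in>insert g F. c' k *s w k) = 0"
    using assms by (simp add: sum.insert e) (simp add: c'_def)
  then have "(\<Sum>k\<in>insert g F. c' k *s u k) = 0" by (rule transfer)
  then show ?thesis using assms by (simp add: sum.insert e) (simp add: c'_def)
qed

lemma Full:
  assumes l: "l < M" and F: "F \<subseteq> {j. cl j = l}" "card F = vec.dim (S l)" and g: "cl g = l"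
  shows "\<exists>f\<in>F. P$f$g \<noteq> 0"
proof (cases "g \<in> F")
  case True then show ?thesis using Pdiag by blast
next
  case False
  obtain c where c: "w g = (\<Sum>f\<in>F. c f *s w f)" using span_J[OF l F g] .
  have ug: "u g = (\<Sum>f\<in>F. c f *s u f)" by (rule rel_u[OF False _ c]) simp
  show ?thesis
  proof (rule ccontr)
    assume "\<not> ?thesis"
    then have z: "\<forall>f\<in>F. P$f$g = 0" by simp
    have "ip (u g) (u g) = (\<Sum>f\<in>F. cj (ip (c f *s u f) (u g)))"
      by (subst (2) ug) (rule ip_sum2)
    also have "\<dots> = (\<Sum>f\<in>F. cj (c f * cj (P$f$g)))"
    proof (rule sum.cong)
      fix f assume "f \<in> F"
      have "ip (u f) (u g) = cj (P$f$g)" by (simp only: Pent[of g f, symmetric] Psym[of g f])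
      then show "cj (ip (c f *s u f) (u g)) = cj (c f * cj (P$f$g))" by (simp add: ip_scale1)
    qed simp
    also have "\<dots> = 0" using z by simp
    finally have "u g = 0" by simp
    then show False using Wu[of g] w_nz by simp
  qed
qed

lemma Grow:
  assumes l: "l < M" and B: "B \<subseteq> {j. cl j = l}" "B \<noteq> {}" "card B \<le> vec.dim (S l)"
  shows "\<exists>h\<in>B. \<exists>g. cl g = l \<and> g \<notin> B \<and> P$h$g \<noteq> 0"
proof (rule ccontr)
  assume "\<not> ?thesis"
  then have noedge: "\<And>h g. h \<in> B \<Longrightarrow> cl g = l \<Longrightarrow> g \<notin> B \<Longrightarrow> P$h$g = 0" by blast
  obtain F where F: "B \<subseteq> F" "F \<subseteq> {j. cl j = l}" "card F = vec.dim (S l)"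
    using extend_J[OF l B(1) B(3)] .
  have "card {j. cl j = l} > card F" using J_props(1)[OF l] J_eq[OF l] F by simp
  then obtain g where g: "cl g = l" "g \<notin> F"
    by (metis (mono_tags, lifting) card_mono finite_class.finite_code not_le subsetI mem_Collect_eq)
  obtain c where c: "w g = (\<Sum>f\<in>F. c f *s w f)" using span_J[OF l F(2,3) g(1)] .
  have ug: "u g = (\<Sum>f\<in>F. c f *s u f)" by (rule rel_u[OF g(2) _ c]) simp
  define v where "v = (\<Sum>f\<in>B. c f *s u f)"
  have vh: "ip v (u h) = 0" if h: "h \<in> B" for h
  proof -
    have "0 = ip (u g) (u h)" using noedge[OF h g(1)] g F by (auto simp: Pent)
    also have "\<dots> = (\<Sum>f\<in>F. c f * P$h$f)" by (simp add: ug ip_sum1 ip_scale1 Pent)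
    also have "\<dots> = (\<Sum>f\<in>B. c f * P$h$f)"
      by (rule sum.mono_neutral_right) (use F noedge[OF h] in auto)
    also have "\<dots> = ip v (u h)" by (simp add: v_def ip_sum1 ip_scale1 Pent)
    finally show ?thesis by simp
  qed
  have "ip v v = (\<Sum>h\<in>B. cj (ip (c h *s u h) v))"
    by (subst (2) v_def) (rule ip_sum2)
  also have "\<dots> = 0"
    by (rule sum.neutral) (simp add: ip_scale1 ip_sym[of "u _" v] vh)
  finally have "v = 0" by simp
  moreover have "W *v v = (\<Sum>f\<in>B. c f *s w f)" by (simp add: v_def mv_sum mv_scale Wu)
  ultimately have "(\<Sum>f\<in>B. c f *s w f) = 0" by simp
  then have cB: "\<forall>f\<in>B. c f = 0" using indep_J[OF l B(1) B(3)] by blast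
  obtain f0 where f0: "f0 \<in> B" using B(2) by blast
  define F' where "F' = insert g (F - {f0})"
  define c' where "c' k = (if k = g then -1 else c k)" for k
  have finF: "finite F" by simp
  have "(\<Sum>k\<in>F - {f0}. c k *s w k) = (\<Sum>k\<in>F. c k *s w k)"
    by (rule sum.mono_neutral_left) (use cB f0 in auto)
  moreover have "(\<Sum>k\<in>F - {f0}. c' k *s w k) = (\<Sum>k\<in>F - {f0}. c k *s w k)"
    by (rule sum.cong) (use g in \<open>auto simp: c'_def\<close>)
  ultimately have "(\<Sum>k\<in>F'. c' k *s w k) = 0"
    using g c by (simp add: F'_def sum.insert) (simp add: c'_def)
  moreover have "F' \<subseteq> {j. cl j = l}" using F g by (auto simp: F'_def)
  moreover have "card F' \<le> vec.dim (S l)"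
  proof -
    have "card (F - {f0}) = card F - 1" using f0 F by (simp add: card_Diff_singleton subsetD)
    moreover have "card F \<ge> 1" using F f0 by (metis card_0_eq empty_iff finF less_one not_le subsetD)
    ultimately show ?thesis using g F by (simp add: F'_def card_insert_if)
  qed
  ultimately have "c' g = 0" using indep_J[OF l, of F' c' g] by (simp add: F'_def)
  then show False by (simp add: c'_def)
qed


abbreviation Gp where "Gp i j \<equiv> P$i$j \<noteq> 0"

lemma reach_cl: "reach Gp k i j \<Longrightarrow> cl i = cl j"
  by (rule reach_inv[of Gp cl]) (use block in blast)

lemma ball:
  assumes "k < vec.dim (S (cl i))"
  shows "(\<forall>j. cl j = cl i \<longrightarrow> reach Gp k i j) \<or> k + 1 \<le> card {j. reach Gp k i j}"
  using assms
proof (induction k)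
  case 0 then show ?case by simp
next
  case (Suc k)
  define l where "l = cl i"
  have l: "l < M" using cl_props by (simp add: l_def)
  have diag: "\<forall>i. Gp i i" using Pdiag by blast
  define Bk where "Bk = {j. reach Gp k i j}"
  define Bk' where "Bk' = {j. reach Gp (Suc k) i j}"
  have sub: "Bk \<subseteq> Bk'" using reach_suc[of Gp, OF diag] by (auto simp: Bk_def Bk'_def)
  from Suc have IH: "(\<forall>j. cl j = l \<longrightarrow> reach Gp k i j) \<or> k + 1 \<le> card Bk"
    by (simp add: l_def Bk_def)
  show ?case
  proof (cases "\<forall>j. cl j = l \<longrightarrow> reach Gp k i j")
    case True then show ?thesis using reach_suc[of Gp, OF diag] by (auto simp: l_def)
  next
    case False
    then have ck: "k + 1 \<le> card Bk" using IH by blast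
    show ?thesis
    proof (cases "card Bk \<ge> k + 2")
      case True
      then show ?thesis using card_mono[OF _ sub] by (simp add: Bk'_def)
    next
      case False
      then have "card Bk \<le> vec.dim (S l)" using ck Suc.prems by (simp add: l_def)
      moreover have "Bk \<noteq> {}"
        using reach_mono[of Gp, OF diag, of 0 k i i] by (auto simp: Bk_def)
      moreover have "Bk \<subseteq> {j. cl j = l}" using reach_cl by (auto simp: Bk_def l_def)
      ultimately obtain h g where hg: "h \<in> Bk" "cl g = l" "g \<notin> Bk" "Gp h g"
        using Grow[OF l] by blast
      have "g \<in> Bk'" using reach_snoc[of Gp k i h g] hg by (simp add: Bk_def Bk'_def del: reach.simps)
      then have "insert g Bk \<subseteq> Bk'" using sub by auto
      then have "card (insert g Bk) \<le> card Bk'" by (simp add: card_mono)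
      then show ?thesis using hg ck by (simp add: Bk'_def)
    qed
  qed
qed

lemma dmax_ge: "l < M \<Longrightarrow> vec.dim (S l) \<le> Max ((\<lambda>i. vec.dim (S i)) ` {..<M})"
  by (rule Max_ge) auto

lemma reach_full:
  assumes "cl j = cl i"
  shows "reach Gp (Max ((\<lambda>i. vec.dim (S i)) ` {..<M})) i j"
proof -
  define l where "l = cl i"
  have l: "l < M" using cl_props by (simp add: l_def)
  define d where "d = vec.dim (S l)"
  have d: "d > 0" using d_pos[OF l] by (simp add: d_def)
  have diag: "\<forall>i. Gp i i" using Pdiag by blast
  have dm: "d \<le> Max ((\<lambda>i. vec.dim (S i)) ` {..<M})" using dmax_ge[OF l] by (simp add: d_def)
  have "reach Gp d i j"
  proof -
    have b: "(\<forall>j. cl j = l \<longrightarrow> reach Gp (d - 1) i j) \<or> d - 1 + 1 \<le> card {j. reach Gp (d - 1) i j}"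
      using ball[of "d - 1" i] d by (simp add: l_def d_def)
    show ?thesis
    proof (cases "\<forall>j. cl j = l \<longrightarrow> reach Gp (d - 1) i j")
      case True
      then show ?thesis using reach_mono[of Gp, OF diag, of "d - 1" d i j] assms by (simp add: l_def)
    next
      case False
      then have "d - 1 + 1 \<le> card {j. reach Gp (d - 1) i j}" using b by blast
      then have "d \<le> card {j. reach Gp (d - 1) i j}" using d by simp
      then obtain F where F: "F \<subseteq> {j. reach Gp (d - 1) i j}" "card F = d" "finite F"
        by (rule obtain_subset_with_card_n)
      have "F \<subseteq> {j. cl j = l}" using F reach_cl by (auto simp: l_def)
      then obtain f where f: "f \<in> F" "Gp f j"
        using Full[OF l _ _, of F j] F assms by (auto simp: d_def l_def)
      have "reach Gp (Suc (d - 1)) i j" using reach_snoc[of Gp "d - 1" i f j] f F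
        by (auto simp del: reach.simps)
      then show ?thesis using d by simp
    qed
  qed
  then show ?thesis using reach_mono[of Gp, OF diag dm] by blast
qed

lemma reach_iff: "reach Gp (Max ((\<lambda>i. vec.dim (S i)) ` {..<M})) i j \<longleftrightarrow>
    (\<exists>l<M. w i \<in> S l \<and> w j \<in> S l)"
proof
  assume "reach Gp (Max ((\<lambda>i. vec.dim (S i)) ` {..<M})) i j"
  then have "cl i = cl j" by (rule reach_cl)
  then show "\<exists>l<M. w i \<in> S l \<and> w j \<in> S l" using cl_props by metis
next
  assume "\<exists>l<M. w i \<in> S l \<and> w j \<in> S l"
  then have "cl j = cl i" using cl_eq by metis
  then show "reach Gp (Max ((\<lambda>i. vec.dim (S i)) ` {..<M})) i j" by (rule reach_full)
qed

lemma sim_Q: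
  assumes Q: "Q = (\<chi> i j. of_real (q i j))" and q: "\<forall>i j. q i j \<ge> 0"
    and qP: "\<And>i j. q i j \<noteq> 0 \<longleftrightarrow> P$i$j \<noteq> 0" and T: "transpose Q = Q"
  shows "similarity_matrix (mpow Q (Max ((\<lambda>i. vec.dim (S i)) ` {..<M}))) W M S"
proof -
  let ?d = "Max ((\<lambda>i. vec.dim (S i)) ` {..<M})"
  obtain p where p: "\<forall>i j. p i j \<ge> 0" "mpow ((\<chi> i j. of_real (q i j)) :: 'a^'n^'n) ?d = (\<chi> i j. of_real (p i j))"
    "\<forall>i j. p i j \<noteq> 0 \<longleftrightarrow> reach (\<lambda>i j. q i j \<noteq> 0) ?d i j"
    using mpow_real[OF q] by blast
  have G: "(\<lambda>i j. q i j \<noteq> 0) = Gp" using qP by (intro ext) simp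
  show ?thesis unfolding similarity_matrix_def
  proof (intro conjI allI)
    show "transpose (mpow Q ?d) = mpow Q ?d" by (rule mpow_transpose[OF T])
    fix i j
    show "mpow Q ?d $ i $ j \<noteq> 0 \<longleftrightarrow> (\<exists>l<M. column i W \<in> S l \<and> column j W \<in> S l)"
      using p(2,3) reach_iff[of i j] unfolding Q G by simp
  qed
qed

lemma main_sim:
  "similarity_matrix (mpow (mbin P) (Max ((\<lambda>i. vec.dim (S i)) ` {..<M}))) W M S \<and>
   similarity_matrix (mpow (mabs P) (Max ((\<lambda>i. vec.dim (S i)) ` {..<M}))) W M S"
proof
  have ps: "P$j$i \<noteq> 0 \<longleftrightarrow> P$i$j \<noteq> 0" for i j using Psym[of j i] by simp
  show "similarity_matrix (mpow (mbin P) (Max ((\<lambda>i. vec.dim (S i)) ` {..<M}))) W M S"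
    by (rule sim_Q[of _ "\<lambda>i j. if P$i$j \<noteq> 0 then 1 else 0"])
       (auto simp: mbin_def vec_eq_iff transpose_def ps)
  have pn: "norm (P$j$i) = norm (P$i$j)" for i j using Psym[of j i] by (simp add: norm_cj)
  show "similarity_matrix (mpow (mabs P) (Max ((\<lambda>i. vec.dim (S i)) ` {..<M}))) W M S"
    by (rule sim_Q[of _ "\<lambda>i j. norm (P$i$j)"])
       (auto simp: mabs_def vec_eq_iff transpose_def pn)
qed

lemma main_svd: "skinny_svd cj W U \<sigma> V \<Longrightarrow> P = V ** adj cj V"
  unfolding skinny_svd_def P_def using svd_pinv by blast

end

context cjf begin
end

lemma cjf_real: "cjf (\<lambda>x::real. x)"
  by unfold_locales (simp_all add: power2_eq_square)

lemma cjf_complex: "cjf cnj"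
  by unfold_locales (simp_all add: complex_norm_square[symmetric])

lemma corollary_gen:
  assumes cjf: "cjf cj"
  shows "\<forall>(M::nat) (S :: nat \<Rightarrow> ('a::real_normed_field^'m) set) (W :: 'a^'n^'m).
      (\<forall>i<M. vec.subspace (S i) \<and> S i \<noteq> {0}) \<and>
      independent_subspaces M S \<and>
      (\<forall>j. column j W \<in> (\<Union>i<M. S i)) \<and>
      (\<forall>i<M. generic_data (S i) (\<lambda>j. column j W) {j. column j W \<in> S i})
      \<longrightarrow>
      (let dmax = Max ((\<lambda>i. vec.dim (S i)) ` {..<M}); P = pinv cj W ** W in
        similarity_matrix (mpow (mbin P) dmax) W M S \<and>
        similarity_matrix (mpow (mabs P) dmax) W M S \<and>
        (\<forall>(U :: 'a^'r::{finite,linorder}^'m) \<sigma> V.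
           skinny_svd cj W U \<sigma> V \<longrightarrow> P = V ** adj cj V))"
proof (intro allI impI)
  fix M :: nat and S :: "nat \<Rightarrow> ('a^'m) set" and W :: "'a^'n^'m"
  assume h: "(\<forall>i<M. vec.subspace (S i) \<and> S i \<noteq> {0}) \<and>
      independent_subspaces M S \<and>
      (\<forall>j. column j W \<in> (\<Union>i<M. S i)) \<and>
      (\<forall>i<M. generic_data (S i) (\<lambda>j. column j W) {j. column j W \<in> S i})"
  interpret c: clus cj M S W
    using cjf h by (simp add: clus_def clus_axioms_def)
  show "let dmax = Max ((\<lambda>i. vec.dim (S i)) ` {..<M}); P = pinv cj W ** W in
        similarity_matrix (mpow (mbin P) dmax) W M S \<and>
        similarity_matrix (mpow (mabs P) dmax) W M S \<and>
        (\<forall>(U :: 'a^'r::{finite,linorder}^'m) \<sigma> V.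
           skinny_svd cj W U \<sigma> V \<longrightarrow> P = V ** adj cj V)"
    using c.main_sim c.main_svd unfolding c.P_def Let_def by blast
qed

theorem corollary4:
  shows
   "(\<forall>(M::nat) (S :: nat \<Rightarrow> (real^'m) set) (W :: real^'n^'m).
      (\<forall>i<M. vec.subspace (S i) \<and> S i \<noteq> {0}) \<and>
      independent_subspaces M S \<and>
      (\<forall>j. column j W \<in> (\<Union>i<M. S i)) \<and>
      (\<forall>i<M. generic_data (S i) (\<lambda>j. column j W) {j. column j W \<in> S i})
      \<longrightarrow>
      (let dmax = Max ((\<lambda>i. vec.dim (S i)) ` {..<M}); P = pinv (\<lambda>x. x) W ** W in
        similarity_matrix (mpow (mbin P) dmax) W M S \<and>
        similarity_matrix (mpow (mabs P) dmax) W M S \<and>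
        (\<forall>(U :: real^'r::{finite,linorder}^'m) \<sigma> V.
           skinny_svd (\<lambda>x. x) W U \<sigma> V \<longrightarrow> P = V ** adj (\<lambda>x. x) V)))
  \<and>
   (\<forall>(M::nat) (S :: nat \<Rightarrow> (complex^'m) set) (W :: complex^'n^'m).
      (\<forall>i<M. vec.subspace (S i) \<and> S i \<noteq> {0}) \<and>
      independent_subspaces M S \<and>
      (\<forall>j. column j W \<in> (\<Union>i<M. S i)) \<and>
      (\<forall>i<M. generic_data (S i) (\<lambda>j. column j W) {j. column j W \<in> S i})
      \<longrightarrow>
      (let dmax = Max ((\<lambda>i. vec.dim (S i)) ` {..<M}); P = pinv cnj W ** W in
        similarity_matrix (mpow (mbin P) dmax) W M S \<and>
        similarity_matrix (mpow (mabs P) dmax) W M S \<and>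
        (\<forall>(U :: complex^'r::{finite,linorder}^'m) \<sigma> V.
           skinny_svd cnj W U \<sigma> V \<longrightarrow> P = V ** adj cnj V)))"
  by (rule conjI[OF corollary_gen[OF cjf_real] corollary_gen[OF cjf_complex]])

end
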